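(* Let $n$ be a positive integer, $g=3n+1$, and let $G$ be a pure $(2n)$-sparse gapset of genus $g$ with depth $q$. Then $G$ is symmetric if and only if $q=4$.
   Context: A gapset is a finite set $G\subset\mathbb{N}=\{1,2,\dots\}$ such that whenever $z\in G$ and $z=x+y$ with $x,y\in\mathbb{N}$, then $x\in G$ or $y\in G$; its genus is $g=\#G$. Write $G=\{\ell_1<\dots<\ell_g\}$. Multiplicity $m(G)=\min\{s\in\mathbb{N}:s\notin G\}$; conductor $c(G)=\min\{s\in\mathbb{N}: s+t\notin G\ \forall t\in\mathbb{N}_0\}$; Frobenius number $F(G)=c(G)-1=\ell_g$; depth $q(G)=\lceil c(G)/m(G)\rceil$. $G$ is symmetric if $F(G)=2g-1$. $G$ is pure $\kappa$-sparse if $\ell_{i+1}-\ell_i\le\kappa$ for all $i$ with equality for some $i$. *)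

theory Defs
  imports Complex_Main
begin

definition gapset :: "nat set \<Rightarrow> bool" where
  "gapset G \<longleftrightarrow> finite G \<and> 0 \<notin> G \<and>
     (\<forall>z\<in>G. \<forall>x y. 0 < x \<and> 0 < y \<and> z = x + y \<longrightarrow> x \<in> G \<or> y \<in> G)"

definition genus :: "nat set \<Rightarrow> nat" where
  "genus G = card G"

definition multiplicity :: "nat set \<Rightarrow> nat" where
  "multiplicity G = (LEAST s. 0 < s \<and> s \<notin> G)"

definition conductor :: "nat set \<Rightarrow> nat" where
  "conductor G = (LEAST s. 0 < s \<and> (\<forall>t. s + t \<notin> G))"

definition frobenius :: "nat set \<Rightarrow> nat" where
  "frobenius G = conductor G - 1"

definition depth :: "nat set \<Rightarrow> nat" where
  "depth G = nat \<lceil>real (conductor G) / real (multiplicity G)\<rceil>"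

definition symmetric_gapset :: "nat set \<Rightarrow> bool" where
  "symmetric_gapset G \<longleftrightarrow> int (frobenius G) = 2 * int (genus G) - 1"

definition consecutive_gaps :: "nat set \<Rightarrow> nat \<Rightarrow> nat \<Rightarrow> bool" where
  "consecutive_gaps G x y \<longleftrightarrow> x \<in> G \<and> y \<in> G \<and> x < y \<and> (\<forall>z\<in>G. \<not> (x < z \<and> z < y))"

definition pure_sparse :: "nat \<Rightarrow> nat set \<Rightarrow> bool" where
  "pure_sparse \<kappa> G \<longleftrightarrow>
     (\<forall>x y. consecutive_gaps G x y \<longrightarrow> y - x \<le> \<kappa>) \<and>
     (\<exists>x y. consecutive_gaps G x y \<and> y - x = \<kappa>)"

end

theory Submission
  imports Defs
begin

lemma gap_closed:
  assumes "gapset G" "a \<notin> G" "b \<notin> G" shows "a + b \<notin> G"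
proof
  assume h: "a + b \<in> G"
  have "0 \<notin> G" using assms(1) by (simp add: gapset_def)
  show False
  proof (cases "a = 0 \<or> b = 0")
    case True then show ?thesis using h assms by auto
  next
    case False
    then have "0 < a" "0 < b" by auto
    then show ?thesis using h assms(2,3) assms(1)[unfolded gapset_def] by blast
  qed
qed

lemma mult_notin:
  assumes "gapset G" "m \<notin> G" shows "k * m \<notin> G"
proof (induction k)
  case 0 then show ?case using assms(1) by (simp add: gapset_def)
next
  case (Suc k) then show ?case using gap_closed[OF assms(1) Suc assms(2)] by (simp add: add.commute)
qed

lemma depth_eq4:
  assumes "0 < m"
  shows "nat \<lceil>real c / real m\<rceil> = 4 \<longleftrightarrow> 3 * m < c \<and> c \<le> 4 * m"
proof -
  have "nat \<lceil>real c / real m\<rceil> = 4 \<longleftrightarrow> \<lceil>real c / real m\<rceil> = 4"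
    using nat_eq_iff[of "\<lceil>real c / real m\<rceil>" 4] by linarith
  also have "\<dots> \<longleftrightarrow> 3 < real c / real m \<and> real c / real m \<le> 4"
    by (simp add: ceiling_eq_iff)
  also have "\<dots> \<longleftrightarrow> 3 * real m < real c \<and> real c \<le> 4 * real m"
    using assms by (simp add: less_divide_eq divide_le_eq)
  also have "\<dots> \<longleftrightarrow> 3 * m < c \<and> c \<le> 4 * m" by linarith
  finally show ?thesis .
qed

theorem mainTheorem6:
  fixes n :: nat and G :: "nat set"
  assumes "0 < n"
    and "gapset G"
    and "genus G = 3 * n + 1"
    and "pure_sparse (2 * n) G"
  shows "symmetric_gapset G \<longleftrightarrow> depth G = 4"
proof -
  have fin: "finite G" and z: "0 \<notin> G" using assms(2) by (auto simp: gapset_def)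
  have cardG: "card G = 3 * n + 1" using assms(3) by (simp add: genus_def)
  then have ne: "G \<noteq> {}" by auto
  define F where "F = Max G"
  have FG: "F \<in> G" using fin ne F_def by simp
  have leF: "\<And>z. z \<in> G \<Longrightarrow> z \<le> F" using fin F_def by simp
  have cond: "conductor G = F + 1"
    unfolding conductor_def
  proof (rule Least_equality)
    show "0 < F + 1 \<and> (\<forall>t. F + 1 + t \<notin> G)" using leF by fastforce
  next
    fix s assume s: "0 < s \<and> (\<forall>t. s + t \<notin> G)"
    show "F + 1 \<le> s"
    proof (rule ccontr)
      assume "\<not> F + 1 \<le> s"
      then have "s + (F - s) = F" by simp
      then show False using s FG by metis
    qed
  qed
  have frob: "frobenius G = F" using cond by (simp add: frobenius_def)
  define m where "m = multiplicity G"
  have ex: "0 < F + 1 \<and> F + 1 \<notin> G" using leF[of "F+1"] by auto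
  have m0: "0 < m" and mG: "m \<notin> G"
    using LeastI[of "\<lambda>s. 0 < s \<and> s \<notin> G", OF ex] by (auto simp: m_def multiplicity_def)
  have below: "\<And>s. 0 < s \<Longrightarrow> s < m \<Longrightarrow> s \<in> G"
    using not_less_Least[of _ "\<lambda>s. 0 < s \<and> s \<notin> G"] by (auto simp: m_def multiplicity_def)
  have dep: "depth G = 4 \<longleftrightarrow> 3 * m < F + 1 \<and> F + 1 \<le> 4 * m"
    using depth_eq4[OF m0, of "F+1"] cond by (simp add: depth_def m_def)
  obtain x y where xy: "consecutive_gaps G x y" "y - x = 2 * n"
    using assms(4) by (auto simp: pure_sparse_def)
  have bound: "\<And>a b. consecutive_gaps G a b \<Longrightarrow> b - a \<le> 2 * n"
    using assms(4) by (auto simp: pure_sparse_def)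
  have xG: "x \<in> G" and yG: "y \<in> G" and xy1: "x < y" and btw: "\<And>z. z \<in> G \<Longrightarrow> \<not> (x < z \<and> z < y)"
    using xy(1) by (auto simp: consecutive_gaps_def)
  have x0: "0 < x" using xG z by (cases x) auto
  have m2n: "2 * n \<le> m"
  proof (rule ccontr)
    assume "\<not> 2 * n \<le> m"
    then have "x < y - m" "y - m < y" using xy(2) m0 xy1 by auto
    then have "y - m \<notin> G" using btw by blast
    then have "(y - m) + m \<notin> G" using gap_closed[OF assms(2) _ mG] by blast
    then show False using yG \<open>x < y - m\<close> by simp
  qed
  define A where "A = {0..F} - G"
  have Gsub: "G \<subseteq> {0..F}" using leF by auto
  have cardsplit: "card {0..F} = card G + card A"
    unfolding A_def using Gsub fin card_Diff_subset[OF fin Gsub] card_mono[OF _ Gsub]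
    by (simp add: card_Diff_subset[OF fin Gsub])
  have img: "(\<lambda>s. F - s) ` A \<subseteq> G"
  proof
    fix w assume "w \<in> (\<lambda>s. F - s) ` A"
    then obtain s where s: "s \<in> A" "w = F - s" by auto
    show "w \<in> G"
    proof (rule ccontr)
      assume "w \<notin> G"
      have "s \<notin> G" "s \<le> F" using s A_def by auto
      then have "s + w \<notin> G" using gap_closed[OF assms(2)] \<open>w \<notin> G\<close> by blast
      then show False using s \<open>s \<le> F\<close> FG by simp
    qed
  qed
  have injA: "inj_on (\<lambda>s. F - s) A" unfolding A_def by (auto intro!: inj_onI)
  have cardA: "card A \<le> card G"
    using card_inj_on_le[OF injA img fin] .
  have Fle: "F + 1 \<le> 2 * card G" using cardsplit cardA by simp
  show ?thesis
  proof
    assume "symmetric_gapset G"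
    then have F6: "F = 6 * n + 1" using frob cardG by (simp add: symmetric_gapset_def genus_def)
    have eqA: "card ((\<lambda>s. F - s) ` A) = card G"
      using cardsplit F6 cardG card_image[OF injA] by simp
    have imgeq: "(\<lambda>s. F - s) ` A = G"
      using card_subset_eq[OF fin img eqA] .
    have notin: "\<And>j. j \<in> G \<Longrightarrow> F - j \<notin> G"
    proof
      fix j assume j: "j \<in> G" "F - j \<in> G"
      then obtain s where s: "s \<in> A" "F - j = F - s" using imgeq by (metis imageE)
      have "s \<le> F" "s \<notin> G" using s A_def by auto
      moreover have "j \<le> F" using leF j by simp
      ultimately show False using s j by (metis diff_diff_cancel)
    qed
    have "{1..<m} \<subseteq> G" using below by auto
    then have "card {1..<m} \<le> card G" using fin card_mono by blast
    then have "m \<le> 3 * n + 2" using cardG by simp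
    then have mF: "m < F" using F6 assms(1) by simp
    have FmG: "F - m \<in> G"
    proof -
      have "F = (F - m) + m" using mF by simp
      moreover have "0 < F - m" using mF by simp
      ultimately show ?thesis using assms(2) FG mG m0 unfolding gapset_def by blast
    qed
    have "consecutive_gaps G (F - m) F"
      unfolding consecutive_gaps_def
    proof (intro conjI FmG FG ballI)
      show "F - m < F" using mF m0 by simp
    next
      fix w assume w: "w \<in> G"
      show "\<not> (F - m < w \<and> w < F)"
      proof
        assume h: "F - m < w \<and> w < F"
        then have "F - w \<in> G" using below mF by auto
        then have "F - (F - w) \<notin> G" using notin by blast
        then show False using h w by simp
      qed
    qed
    then have "m \<le> 2 * n" using bound mF by fastforce
    then have "m = 2 * n" using m2n by simp
    then show "depth G = 4" using dep F6 assms(1) by simp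
  next
    assume "depth G = 4"
    then have "3 * m < F + 1" using dep by simp
    then have "F = 3 * m \<or> F = 6 * n + 1" using Fle cardG m2n by linarith
    moreover have "3 * m \<notin> G" using mult_notin[OF assms(2) mG] .
    ultimately have "F = 6 * n + 1" using FG by auto
    then show "symmetric_gapset G" using frob cardG by (simp add: symmetric_gapset_def genus_def)
  qed
qed

end
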